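(* Let $\gamma\in(0,1)$ and $\alpha_n=\gamma/(1+n\gamma)$ for $n\ge0$. Then for nonnegative integers $n,s$ and a positive integer $r$, \[ \mu_{n,r,s}=\begin{cases}\delta_{n+r,s}&\text{if } s\ge n+r,\\[2pt] -\dfrac{n\gamma^2}{(1+(r-1)\gamma)(1+s\gamma)}&\text{if } n-1<s<n+r,\\[2pt] \dfrac{(1-\gamma)\gamma}{(1+(r-1)\gamma)(1+s\gamma)}&\text{if } 0\le s\le n-1.\end{cases} \]
   Context: For a polynomial $f(z)=\sum_{k=0}^n a_kz^k$ of degree $n$, write $\overline{f}(z)=\sum_k\overline{a_k}z^k$ and $f^*(z)=z^n\overline{f}(1/z)$. Given $(\alpha_n)$ with $|\alpha_n|<1$, define monic $\Phi_n$ by $\Phi_0=1$, $\Phi_{n+1}(z)=z\Phi_n(z)-\overline{\alpha_n}\Phi_n^*(z)$. Let $\mathcal{L}$ be the unique linear functional on Laurent polynomials with $\mathcal{L}(1)=1$ and $\mathcal{L}(\Phi_m(z)\overline{\Phi_n}(1/z))=0$ for $m\neq n$; set $\langle f,g\rangle=\mathcal{L}(f(z)\overline{g}(1/z))$ and $\mu_{n,r,s}=\langle\Phi_s(z),z^n\Phi_r(z)\rangle/\langle\Phi_s,\Phi_s\rangle$. *)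

theory Defs
  imports Complex_Main "HOL-Computational_Algebra.Polynomial"
begin

definition conj_poly :: "complex poly \<Rightarrow> complex poly" where
  "conj_poly f = map_poly cnj f"

text \<open>\<open>f^*(z) = z^n \<bar>f(1/z)\<close>, n = degree f: coefficient reversal\<close>
definition star_poly :: "complex poly \<Rightarrow> complex poly" where
  "star_poly f = reflect_poly (conj_poly f)"

fun Phi :: "(nat \<Rightarrow> complex) \<Rightarrow> nat \<Rightarrow> complex poly" where
  "Phi \<alpha> 0 = 1"
| "Phi \<alpha> (Suc n) = pCons 0 (Phi \<alpha> n) - smult (cnj (\<alpha> n)) (star_poly (Phi \<alpha> n))"

text \<open>A linear functional on Laurent polynomials is determined by its moments
  \<open>mom k = L(z^k)\<close>, \<open>k \<in> \<int>\<close>.  \<open>lpair mom f g = L(f(z) \<bar>g(1/z))\<close>.\<close>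
definition lpair :: "(int \<Rightarrow> complex) \<Rightarrow> complex poly \<Rightarrow> complex poly \<Rightarrow> complex" where
  "lpair mom f g = (\<Sum>i\<le>degree f. \<Sum>j\<le>degree g.
      coeff f i * cnj (coeff g j) * mom (int i - int j))"

definition moments :: "(nat \<Rightarrow> complex) \<Rightarrow> int \<Rightarrow> complex" where
  "moments \<alpha> = (THE mom. mom 0 = 1 \<and>
      (\<forall>m n. m \<noteq> n \<longrightarrow> lpair mom (Phi \<alpha> m) (Phi \<alpha> n) = 0))"

definition ip :: "(nat \<Rightarrow> complex) \<Rightarrow> complex poly \<Rightarrow> complex poly \<Rightarrow> complex" where
  "ip \<alpha> f g = lpair (moments \<alpha>) f g"

definition mu :: "(nat \<Rightarrow> complex) \<Rightarrow> nat \<Rightarrow> nat \<Rightarrow> nat \<Rightarrow> complex" where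
  "mu \<alpha> n r s = ip \<alpha> (Phi \<alpha> s) (monom 1 n * Phi \<alpha> r) / ip \<alpha> (Phi \<alpha> s) (Phi \<alpha> s)"

end

theory Submission
  imports Defs
begin

definition cc :: "real \<Rightarrow> nat \<Rightarrow> real" where
  "cc g n = g / (1 + (real n - 1) * g)"
definition phr :: "real \<Rightarrow> nat \<Rightarrow> nat \<Rightarrow> real" where
  "phr g n i = (if i = n then 1 else if i < n then - cc g n else 0)"
definition m0 :: "real \<Rightarrow> int \<Rightarrow> complex" where
  "m0 g k = (if k = 0 then 1 else complex_of_real g)"

lemma phr_sum_lt: "(\<Sum>j<k. phr g r j) = (if k \<le> r then - real k * cc g r else 1 - real r * cc g r)"
  by (induction k) (auto simp: phr_def algebra_simps)

lemma phr_sum_le: "(\<Sum>j\<le>r. phr g r j) = 1 - real r * cc g r"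
  using phr_sum_lt[of g r "Suc r"] by (simp add: lessThan_Suc_atMost)

lemma shift_sum: "(\<Sum>i<(s::nat). (if i < n then 0 else h (i - n))) = (\<Sum>j<s - n. (h j :: real))"
proof (induction s)
  case (Suc s)
  show ?case
  proof (cases "n \<le> s")
    case True
    then have "Suc s - n = Suc (s - n)" by simp
    then show ?thesis using Suc True by simp
  next
    case False
    then show ?thesis using Suc by simp
  qed
qed simp

lemma D_sum: "(\<Sum>i\<le>s. phr g s i * G i) = - cc g s * (\<Sum>i<s. G i) + G s"
  by (simp add: lessThan_Suc_atMost[symmetric] phr_def sum_distrib_left)

lemma D_sumc: "(\<Sum>i\<le>s. complex_of_real (phr g s i) * H i) = of_real (- cc g s) * (\<Sum>i<s. H i) + H s"
  by (simp add: lessThan_Suc_atMost[symmetric] phr_def sum_distrib_left)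

lemma aux2: "d \<noteq> 0 \<Longrightarrow> (g::real)*((1-g)/d)^2 + (1-g)*(x*(g/d)^2+1) = (1-g)*(g*(1-g) + x*g^2 + d^2)/d^2"
  by (simp add: field_simps power2_eq_square)

lemma aux3: "ds \<noteq> 0 \<Longrightarrow> dr \<noteq> 0 \<Longrightarrow> e \<noteq> 0 \<Longrightarrow> (g::real) \<noteq> 1 \<Longrightarrow>
  g * ((1-g)/ds) * ((1-g)/dr) / ((1-g)*e/ds) = (1-g)*g/(dr*e)"
  by (simp add: field_simps)

lemma aux4: "ds = 1 + (x - 1) * g \<Longrightarrow> ds \<noteq> 0 \<Longrightarrow> dr \<noteq> 0 \<Longrightarrow>
  (g::real) * ((1-g)/ds) * ((1-g)/dr) + (1-g)*((g/ds)*(x - n)*(g/dr) - g/dr) = -(1-g)*g^2*n/(ds*dr)"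
proof -
  assume h: "ds = 1 + (x - 1) * g" "ds \<noteq> 0" "dr \<noteq> 0"
  have "(g::real) * ((1-g)/ds) * ((1-g)/dr) + (1-g)*((g/ds)*(x - n)*(g/dr) - g/dr)
     = (1-g) * g * ((1 - g) + (x - n) * g - ds) / (ds * dr)"
    using h(2,3) by (simp add: field_simps)
  also have "(1 - g) + (x - n) * g - ds = - n * g" using h(1) by (simp add: algebra_simps)
  finally show ?thesis by (simp add: power2_eq_square algebra_simps)
qed

lemma aux5: "ds \<noteq> 0 \<Longrightarrow> dr \<noteq> 0 \<Longrightarrow> e \<noteq> 0 \<Longrightarrow> (g::real) \<noteq> 1 \<Longrightarrow>
  (-(1-g)*g^2*n/(ds*dr)) / ((1-g)*e/ds) = - (n * g^2) / (dr*e)"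
  by (simp add: field_simps)

lemma aux1: "-(a::real) - b * - a = - a * (1 - b)" by (simp add: algebra_simps)

context
  fixes \<gamma> :: real and \<alpha> :: "nat \<Rightarrow> complex"
  assumes g0: "0 < \<gamma>" and g1: "\<gamma> < 1"
    and al: "\<And>k. \<alpha> k = complex_of_real (\<gamma> / (1 + real k * \<gamma>))"
begin

lemma dpos: "0 < 1 + (real n - 1) * \<gamma>"
proof -
  have "real n - 1 \<ge> -1" by simp
  then have "(real n - 1) * \<gamma> \<ge> -1 * \<gamma>" using g0 by (intro mult_right_mono) auto
  then show ?thesis using g1 by linarith
qed

lemma dpos2: "0 < 1 + real n * \<gamma>"
  using g0 by (simp add: add_pos_nonneg)

lemma Phi_coeff_deg: "(\<forall>i. coeff (Phi \<alpha> n) i = of_real (phr \<gamma> n i)) \<and> degree (Phi \<alpha> n) = n"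
proof (induction n)
  case 0
  have "coeff (Phi \<alpha> 0) i = of_real (phr \<gamma> 0 i)" for i
    by (cases i) (auto simp: phr_def)
  then show ?case by simp
next
  case (Suc n)
  have IH: "coeff (Phi \<alpha> n) i = of_real (phr \<gamma> n i)" for i using Suc by simp
  have deg: "degree (Phi \<alpha> n) = n" using Suc by simp
  have cj: "conj_poly (Phi \<alpha> n) = Phi \<alpha> n"
    by (rule poly_eqI) (simp add: conj_poly_def coeff_map_poly IH)
  have d: "1 + (real n - 1) * \<gamma> \<noteq> 0" using dpos[of n] by simp
  have d2: "1 + real n * \<gamma> \<noteq> 0" using dpos2[of n] by simp
  have key: "- (\<gamma> / (1 + (real n - 1) * \<gamma>)) - \<gamma> / (1 + real n * \<gamma>) * - (\<gamma> / (1 + (real n - 1) * \<gamma>))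
      = - (\<gamma> / (1 + real n * \<gamma>))"
  proof -
    have e: "1 - \<gamma> / (1 + real n * \<gamma>) = (1 + (real n - 1) * \<gamma>) / (1 + real n * \<gamma>)"
      using d2 by (simp add: field_simps)
    have "- (\<gamma> / (1 + (real n - 1) * \<gamma>)) - \<gamma> / (1 + real n * \<gamma>) * - (\<gamma> / (1 + (real n - 1) * \<gamma>))
       = - (\<gamma> / (1 + (real n - 1) * \<gamma>)) * (1 - \<gamma> / (1 + real n * \<gamma>))" by (rule aux1)
    also have "\<dots> = - (\<gamma> / (1 + real n * \<gamma>))" unfolding e using d d2 by simp
    finally show ?thesis .
  qed
  have C: "coeff (Phi \<alpha> (Suc n)) i = of_real (phr \<gamma> (Suc n) i)" for i
  proof -
    have "coeff (Phi \<alpha> (Suc n)) i = coeff (pCons 0 (Phi \<alpha> n)) i - cnj (\<alpha> n) * coeff (reflect_poly (Phi \<alpha> n)) i"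
      by (simp add: star_poly_def cj)
    also have "\<dots> = of_real (phr \<gamma> (Suc n) i)"
    proof (cases i)
      case 0
      then show ?thesis by (simp add: coeff_reflect_poly deg IH al phr_def cc_def)
    next
      case (Suc j)
      then show ?thesis
      proof (cases "j < n")
        case True
        then have "coeff (pCons 0 (Phi \<alpha> n)) i - cnj (\<alpha> n) * coeff (reflect_poly (Phi \<alpha> n)) i
           = of_real (- (\<gamma> / (1 + (real n - 1) * \<gamma>)) - \<gamma> / (1 + real n * \<gamma>) * - (\<gamma> / (1 + (real n - 1) * \<gamma>)))"
        proof -
          have "n - Suc j \<noteq> n" "n - Suc j < n" using True by auto
          then have r: "coeff (reflect_poly (Phi \<alpha> n)) i = of_real (- cc \<gamma> n)"
            using Suc True by (auto simp add: coeff_reflect_poly deg IH phr_def)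
          have p: "coeff (pCons 0 (Phi \<alpha> n)) i = of_real (- cc \<gamma> n)"
            using Suc True by (simp add: IH phr_def)
          show ?thesis unfolding r p al cc_def by simp

        qed
        also have "\<dots> = of_real (phr \<gamma> (Suc n) i)"
          using Suc True by (simp only: key) (simp add: phr_def cc_def)
        finally show ?thesis .
      qed (use Suc in \<open>auto simp: coeff_reflect_poly deg IH al phr_def cc_def\<close>)
    qed
    finally show ?thesis .
  qed
  have "degree (Phi \<alpha> (Suc n)) = Suc n"
  proof (rule antisym)
    show "degree (Phi \<alpha> (Suc n)) \<le> Suc n" by (rule degree_le) (simp del: Phi.simps add: C phr_def)
    show "Suc n \<le> degree (Phi \<alpha> (Suc n))" by (rule le_degree) (simp del: Phi.simps add: C phr_def)
  qed
  then show ?case using C by simp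
qed

lemma lp_real:
  assumes cf: "\<And>i. coeff f i = of_real (F i)" and cg: "\<And>i. coeff g i = of_real (G i)"
  shows "lpair (m0 \<gamma>) f g = of_real (\<gamma> * (\<Sum>i\<le>degree f. F i) * (\<Sum>j\<le>degree g. G j)
           + (1 - \<gamma>) * (\<Sum>i\<le>degree f. F i * G i))"
proof -
  have G0: "G i = 0" if "i > degree g" for i
    using coeff_eq_0[OF that] cg[of i] by simp
  have "lpair (m0 \<gamma>) f g = (\<Sum>i\<le>degree f. \<Sum>j\<le>degree g.
      of_real (\<gamma> * (F i * G j) + (1 - \<gamma>) * (if i = j then F i * G j else 0)))"
    unfolding lpair_def by (intro sum.cong refl) (auto simp: cf cg m0_def algebra_simps)
  also have "\<dots> = of_real (\<Sum>i\<le>degree f. \<Sum>j\<le>degree g.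
      (\<gamma> * (F i * G j) + (1 - \<gamma>) * (if i = j then F i * G j else 0)))"
    by (simp only: of_real_sum)
  also have "(\<Sum>i\<le>degree f. \<Sum>j\<le>degree g.
      (\<gamma> * (F i * G j) + (1 - \<gamma>) * (if i = j then F i * G j else 0)))
     = \<gamma> * (\<Sum>i\<le>degree f. F i) * (\<Sum>j\<le>degree g. G j)
           + (1 - \<gamma>) * (\<Sum>i\<le>degree f. F i * G i)"
  proof -
    have d: "(\<Sum>j\<le>degree g. (1 - \<gamma>) * (if i = j then F i * G j else 0)) = (1 - \<gamma>) * (F i * G i)" for i
      using G0[of i] by (auto simp: sum.delta simp flip: sum_distrib_left)
    have A: "(\<Sum>i\<le>degree f. \<Sum>j\<le>degree g. \<gamma> * (F i * G j)) = \<gamma> * (\<Sum>i\<le>degree f. F i) * (\<Sum>j\<le>degree g. G j)"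
      by (simp add: sum_distrib_left sum_distrib_right mult.assoc sum.swap[of _ "{..degree f}"])
    have B: "(\<Sum>i\<le>degree f. \<Sum>j\<le>degree g. (1 - \<gamma>) * (if i = j then F i * G j else 0))
        = (1 - \<gamma>) * (\<Sum>i\<le>degree f. F i * G i)"
      by (simp only: d sum_distrib_left)
    show ?thesis
      by (simp only: sum.distrib A B)
  qed
  finally show ?thesis .
qed

lemma Phi_coeff: "coeff (Phi \<alpha> n) i = of_real (phr \<gamma> n i)"
  using Phi_coeff_deg by blast
lemma Phi_deg: "degree (Phi \<alpha> n) = n"
  using Phi_coeff_deg by blast

lemma key2: "\<gamma> * (1 - real m * cc \<gamma> m) = (1 - \<gamma>) * cc \<gamma> m"
  using dpos[of m] unfolding cc_def by (simp add: field_simps)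

lemma ccd: "cc \<gamma> m * (1 + (real m - 1) * \<gamma>) = \<gamma>"
  using dpos[of m] unfolding cc_def by simp

lemma orth:
  assumes "m \<noteq> k"
  shows "lpair (m0 \<gamma>) (Phi \<alpha> m) (Phi \<alpha> k) = 0"
proof -
  have "lpair (m0 \<gamma>) (Phi \<alpha> m) (Phi \<alpha> k) = of_real (\<gamma> * (\<Sum>i\<le>m. phr \<gamma> m i) * (\<Sum>j\<le>k. phr \<gamma> k j)
           + (1 - \<gamma>) * (\<Sum>i\<le>m. phr \<gamma> m i * phr \<gamma> k i))"
    using lp_real[of "Phi \<alpha> m" "phr \<gamma> m" "Phi \<alpha> k" "phr \<gamma> k"] by (simp add: Phi_coeff Phi_deg)
  also have "\<gamma> * (\<Sum>i\<le>m. phr \<gamma> m i) * (\<Sum>j\<le>k. phr \<gamma> k j)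
           + (1 - \<gamma>) * (\<Sum>i\<le>m. phr \<gamma> m i * phr \<gamma> k i) = 0"
  proof (cases "m < k")
    case True
    have e: "(\<Sum>i\<le>m. phr \<gamma> m i * phr \<gamma> k i) = - cc \<gamma> k * (1 - real m * cc \<gamma> m)"
      unfolding D_sum using True by (simp add: phr_sum_lt) (simp add: phr_def algebra_simps)
    have "\<gamma> * (1 - real m * cc \<gamma> m) * (1 - real k * cc \<gamma> k) + (1 - \<gamma>) * (- cc \<gamma> k * (1 - real m * cc \<gamma> m))
       = (1 - real m * cc \<gamma> m) * (\<gamma> * (1 - real k * cc \<gamma> k) - (1 - \<gamma>) * cc \<gamma> k)"
      by (simp add: algebra_simps)
    also have "\<dots> = 0" by (simp add: key2)
    finally show ?thesis unfolding e phr_sum_le .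
  next
    case False
    then have F: "k < m" using assms by simp
    have e: "(\<Sum>i\<le>m. phr \<gamma> m i * phr \<gamma> k i) = - cc \<gamma> m * (1 - real k * cc \<gamma> k)"
      unfolding D_sum using F by (simp add: phr_sum_lt) (simp add: phr_def algebra_simps)
    have "\<gamma> * (1 - real m * cc \<gamma> m) * (1 - real k * cc \<gamma> k) + (1 - \<gamma>) * (- cc \<gamma> m * (1 - real k * cc \<gamma> k))
       = (1 - real k * cc \<gamma> k) * (\<gamma> * (1 - real m * cc \<gamma> m) - (1 - \<gamma>) * cc \<gamma> m)"
      by (simp add: algebra_simps)
    also have "\<dots> = 0" by (simp add: key2)
    finally show ?thesis unfolding e phr_sum_le .
  qed
  finally show ?thesis by simp
qed

lemma m0sum: "(\<Sum>i<m. m0 \<gamma> (int i)) = (if m = 0 then 0 else of_real (1 + (real m - 1) * \<gamma>))"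
  by (induction m) (auto simp: m0_def algebra_simps)

lemma m0sum': "(\<Sum>i<m. m0 \<gamma> (- int i)) = (if m = 0 then 0 else of_real (1 + (real m - 1) * \<gamma>))"
  using m0sum[of m] by (simp add: m0_def)

lemma moments_eq: "moments \<alpha> = m0 \<gamma>"
  unfolding moments_def
proof (rule the_equality)
  show "m0 \<gamma> 0 = 1 \<and> (\<forall>m n. m \<noteq> n \<longrightarrow> lpair (m0 \<gamma>) (Phi \<alpha> m) (Phi \<alpha> n) = 0)"
    using orth by (simp add: m0_def)
next
  fix mom assume H: "mom 0 = 1 \<and> (\<forall>m n. m \<noteq> n \<longrightarrow> lpair mom (Phi \<alpha> m) (Phi \<alpha> n) = 0)"
  have L1: "lpair mom (Phi \<alpha> m) (Phi \<alpha> 0) = of_real (- cc \<gamma> m) * (\<Sum>i<m. mom (int i)) + mom (int m)" for m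
  proof -
    have "lpair mom (Phi \<alpha> m) (Phi \<alpha> 0) = (\<Sum>i\<le>m. of_real (phr \<gamma> m i) * mom (int i))"
      unfolding lpair_def by (simp add: Phi_deg Phi_coeff del: Phi.simps) (simp add: phr_def)
    then show ?thesis by (simp only: D_sumc)
  qed
  have L2: "lpair mom (Phi \<alpha> 0) (Phi \<alpha> m) = of_real (- cc \<gamma> m) * (\<Sum>i<m. mom (- int i)) + mom (- int m)" for m
  proof -
    have "lpair mom (Phi \<alpha> 0) (Phi \<alpha> m) = (\<Sum>i\<le>m. of_real (phr \<gamma> m i) * mom (- int i))"
      unfolding lpair_def by (simp add: Phi_deg Phi_coeff del: Phi.simps) (simp add: phr_def)
    then show ?thesis by (simp only: D_sumc)
  qed
  have P: "mom (int m) = m0 \<gamma> (int m) \<and> mom (- int m) = m0 \<gamma> (- int m)" for m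
  proof (induction m rule: less_induct)
    case (less m)
    show ?case
    proof (cases "m = 0")
      case True
      then show ?thesis using H by (simp add: m0_def)
    next
      case False
      have s1: "(\<Sum>i<m. mom (int i)) = (\<Sum>i<m. m0 \<gamma> (int i))"
        using less by (intro sum.cong) auto
      have s2: "(\<Sum>i<m. mom (- int i)) = (\<Sum>i<m. m0 \<gamma> (- int i))"
        using less by (intro sum.cong) auto
      have o1: "lpair mom (Phi \<alpha> m) (Phi \<alpha> 0) = 0" using H False by blast
      have o2: "lpair mom (Phi \<alpha> 0) (Phi \<alpha> m) = 0" using H False by metis
      have z1: "of_real (- cc \<gamma> m) * of_real (1 + (real m - 1) * \<gamma>) + mom (int m) = 0"
        using o1 unfolding L1 s1 m0sum if_not_P[OF False] .
      have z2: "of_real (- cc \<gamma> m) * of_real (1 + (real m - 1) * \<gamma>) + mom (- int m) = 0"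
        using o2 unfolding L2 s2 m0sum' if_not_P[OF False] .
      have cm: "complex_of_real (- cc \<gamma> m) * of_real (1 + (real m - 1) * \<gamma>) = - of_real \<gamma>"
        by (simp only: of_real_mult[symmetric] mult_minus_left ccd) simp
      show ?thesis using z1 z2 False unfolding cm by (auto simp: m0_def add_eq_0_iff)
    qed
  qed
  show "mom = m0 \<gamma>"
  proof
    fix k :: int
    have "k = int (nat k) \<or> k = - int (nat (- k))" by arith
    then show "mom k = m0 \<gamma> k" using P by metis
  qed
qed

lemma g_coeff: "coeff (monom 1 n * Phi \<alpha> r) k = of_real (if k < n then 0 else phr \<gamma> r (k - n))"
  by (simp add: coeff_monom_mult Phi_coeff del: Phi.simps)

lemma g_deg: "degree (monom 1 n * Phi \<alpha> r) = n + r"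
proof (rule antisym)
  show "degree (monom 1 n * Phi \<alpha> r) \<le> n + r"
    by (rule degree_le) (auto simp: g_coeff phr_def simp del: Phi.simps)
  show "n + r \<le> degree (monom 1 n * Phi \<alpha> r)"
    by (rule le_degree) (auto simp: g_coeff phr_def simp del: Phi.simps)
qed

lemma S_eq: "1 - real k * cc \<gamma> k = (1 - \<gamma>) / (1 + (real k - 1) * \<gamma>)"
  using dpos[of k] unfolding cc_def by (simp add: field_simps)

lemma mu_real: "mu \<alpha> n r s = of_real (
   (\<gamma> * (1 - real s * cc \<gamma> s) * (1 - real r * cc \<gamma> r)
     + (1 - \<gamma>) * (- cc \<gamma> s * (\<Sum>j<s - n. phr \<gamma> r j) + (if s < n then 0 else phr \<gamma> r (s - n))))
   / (\<gamma> * (1 - real s * cc \<gamma> s) * (1 - real s * cc \<gamma> s)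
     + (1 - \<gamma>) * (- cc \<gamma> s * (- real s * cc \<gamma> s) + 1)))"
proof -
  let ?G = "\<lambda>k. if k < n then 0 else phr \<gamma> r (k - n)"
  have sG: "(\<Sum>j\<le>n + r. ?G j) = 1 - real r * cc \<gamma> r"
  proof -
    have "(\<Sum>j\<le>n + r. ?G j) = (\<Sum>j<Suc (n + r). ?G j)" by (simp add: lessThan_Suc_atMost)
    also have "\<dots> = (\<Sum>j<Suc r. phr \<gamma> r j)" by (simp only: shift_sum) simp
    also have "\<dots> = 1 - real r * cc \<gamma> r" by (simp add: lessThan_Suc_atMost phr_sum_le)
    finally show ?thesis .
  qed
  have num: "ip \<alpha> (Phi \<alpha> s) (monom 1 n * Phi \<alpha> r) = of_real (\<gamma> * (1 - real s * cc \<gamma> s) * (1 - real r * cc \<gamma> r)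
     + (1 - \<gamma>) * (- cc \<gamma> s * (\<Sum>j<s - n. phr \<gamma> r j) + (if s < n then 0 else phr \<gamma> r (s - n))))"
  proof -
    have "ip \<alpha> (Phi \<alpha> s) (monom 1 n * Phi \<alpha> r) = of_real (\<gamma> * (\<Sum>i\<le>s. phr \<gamma> s i) * (\<Sum>j\<le>n + r. ?G j)
           + (1 - \<gamma>) * (\<Sum>i\<le>s. phr \<gamma> s i * ?G i))"
      unfolding ip_def moments_eq
      using lp_real[of "Phi \<alpha> s" "phr \<gamma> s" "monom 1 n * Phi \<alpha> r" ?G]
      by (simp only: Phi_coeff g_coeff Phi_deg g_deg)
    also have "(\<Sum>i\<le>s. phr \<gamma> s i * ?G i) = - cc \<gamma> s * (\<Sum>j<s - n. phr \<gamma> r j) + ?G s"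
      by (simp only: D_sum shift_sum)
    finally show ?thesis by (simp only: sG phr_sum_le)
  qed
  have den: "ip \<alpha> (Phi \<alpha> s) (Phi \<alpha> s) = of_real (\<gamma> * (1 - real s * cc \<gamma> s) * (1 - real s * cc \<gamma> s)
     + (1 - \<gamma>) * (- cc \<gamma> s * (- real s * cc \<gamma> s) + 1))"
  proof -
    have "ip \<alpha> (Phi \<alpha> s) (Phi \<alpha> s) = of_real (\<gamma> * (\<Sum>i\<le>s. phr \<gamma> s i) * (\<Sum>j\<le>s. phr \<gamma> s j)
           + (1 - \<gamma>) * (\<Sum>i\<le>s. phr \<gamma> s i * phr \<gamma> s i))"
      unfolding ip_def moments_eq
      using lp_real[of "Phi \<alpha> s" "phr \<gamma> s" "Phi \<alpha> s" "phr \<gamma> s"]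
      by (simp only: Phi_coeff Phi_deg)
    also have "(\<Sum>i\<le>s. phr \<gamma> s i * phr \<gamma> s i) = - cc \<gamma> s * (- real s * cc \<gamma> s) + 1"
      by (simp add: D_sum phr_sum_lt) (simp add: phr_def)
    finally show ?thesis by (simp only: phr_sum_le)
  qed
  show ?thesis unfolding mu_def num den by simp
qed

lemma Y_eq: "\<gamma> * (1 - real s * cc \<gamma> s) * (1 - real s * cc \<gamma> s)
     + (1 - \<gamma>) * (- cc \<gamma> s * (- real s * cc \<gamma> s) + 1) = (1 - \<gamma>) * (1 + real s * \<gamma>) / (1 + (real s - 1) * \<gamma>)"
proof -
  have d: "1 + (real s - 1) * \<gamma> \<noteq> 0" using dpos[of s] by simp
  have "\<gamma> * (1 - real s * cc \<gamma> s) * (1 - real s * cc \<gamma> s)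
     + (1 - \<gamma>) * (- cc \<gamma> s * (- real s * cc \<gamma> s) + 1)
    = \<gamma> * ((1 - \<gamma>) / (1 + (real s - 1) * \<gamma>))^2 + (1 - \<gamma>) * (real s * (\<gamma> / (1 + (real s - 1) * \<gamma>))^2 + 1)"
    unfolding S_eq by (simp add: cc_def power2_eq_square algebra_simps)
  also have "\<dots> = (1 - \<gamma>) * (\<gamma> * (1 - \<gamma>) + real s * \<gamma>^2 + (1 + (real s - 1) * \<gamma>)^2) / (1 + (real s - 1) * \<gamma>)^2"
    using d by (rule aux2)
  also have "\<gamma> * (1 - \<gamma>) + real s * \<gamma>^2 + (1 + (real s - 1) * \<gamma>)^2 = (1 + (real s - 1) * \<gamma>) * (1 + real s * \<gamma>)"
    by (simp add: algebra_simps power2_eq_square)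
  also have "(1 - \<gamma>) * ((1 + (real s - 1) * \<gamma>) * (1 + real s * \<gamma>)) / (1 + (real s - 1) * \<gamma>)^2
     = (1 - \<gamma>) * (1 + real s * \<gamma>) / (1 + (real s - 1) * \<gamma>)"
    using d by (simp add: power2_eq_square)
  finally show ?thesis .
qed

lemma Y_pos: "0 < (1 - \<gamma>) * (1 + real s * \<gamma>) / (1 + (real s - 1) * \<gamma>)"
  using dpos[of s] dpos2[of s] g1 by simp

lemma case_a: assumes "n + r \<le> s" shows "mu \<alpha> n r s = (if n + r = s then 1 else 0)"
proof (cases "n + r = s")
  case True
  then have T: "s - n = r" by auto
  have X: "\<gamma> * (1 - real s * cc \<gamma> s) * (1 - real r * cc \<gamma> r)
     + (1 - \<gamma>) * (- cc \<gamma> s * (\<Sum>j<s - n. phr \<gamma> r j) + (if s < n then 0 else phr \<gamma> r (s - n)))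
    = \<gamma> * (1 - real s * cc \<gamma> s) * (1 - real s * cc \<gamma> s)
     + (1 - \<gamma>) * (- cc \<gamma> s * (- real s * cc \<gamma> s) + 1)"
  proof -
    have "\<gamma> * (1 - real s * cc \<gamma> s) * (1 - real r * cc \<gamma> r)
     + (1 - \<gamma>) * (- cc \<gamma> s * (\<Sum>j<s - n. phr \<gamma> r j) + (if s < n then 0 else phr \<gamma> r (s - n)))
     = (\<gamma> * (1 - real s * cc \<gamma> s)) * (1 - real r * cc \<gamma> r) + (1 - \<gamma>) * (cc \<gamma> s * real r * cc \<gamma> r + 1)"
      using T True by (simp add: phr_sum_lt phr_def)
    also have "\<dots> = ((1 - \<gamma>) * cc \<gamma> s) * (1 - real r * cc \<gamma> r) + (1 - \<gamma>) * (cc \<gamma> s * real r * cc \<gamma> r + 1)"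
      by (simp only: key2)
    also have "\<dots> = ((1 - \<gamma>) * cc \<gamma> s) * (1 - real s * cc \<gamma> s) + (1 - \<gamma>) * (- cc \<gamma> s * (- real s * cc \<gamma> s) + 1)"
      by (simp add: algebra_simps)
    also have "\<dots> = \<gamma> * (1 - real s * cc \<gamma> s) * (1 - real s * cc \<gamma> s)
     + (1 - \<gamma>) * (- cc \<gamma> s * (- real s * cc \<gamma> s) + 1)"
      by (simp only: key2)
    finally show ?thesis .
  qed
  show ?thesis unfolding mu_real unfolding X using Y_pos[of s] True unfolding Y_eq[symmetric] by simp
next
  case False
  then have T: "s - n > r" "\<not> s < n" "\<not> s - n < r" "s - n \<noteq> r" using assms by auto
  have X: "\<gamma> * (1 - real s * cc \<gamma> s) * (1 - real r * cc \<gamma> r)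
     + (1 - \<gamma>) * (- cc \<gamma> s * (\<Sum>j<s - n. phr \<gamma> r j) + (if s < n then 0 else phr \<gamma> r (s - n)))
    = (1 - real r * cc \<gamma> r) * (\<gamma> * (1 - real s * cc \<gamma> s) - (1 - \<gamma>) * cc \<gamma> s)"
  proof -
    have e1: "(\<Sum>j<s - n. phr \<gamma> r j) = 1 - real r * cc \<gamma> r" using T by (simp add: phr_sum_lt)
    have e2: "(if s < n then 0 else phr \<gamma> r (s - n)) = 0" using T by (simp add: phr_def)
    show ?thesis unfolding e1 e2 by (simp add: algebra_simps)
  qed
  show ?thesis unfolding mu_real unfolding X using False by (simp add: key2)
qed

lemma case_c: assumes "s < n"
  shows "mu \<alpha> n r s = complex_of_real ((1 - \<gamma>) * \<gamma> / ((1 + (real r - 1) * \<gamma>) * (1 + real s * \<gamma>)))"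
proof -
  have e1: "(\<Sum>j<s - n. phr \<gamma> r j) = 0" using assms by simp
  have e2: "(if s < n then 0 else phr \<gamma> r (s - n)) = 0" using assms by simp
  have A: "\<gamma> * (1 - real s * cc \<gamma> s) * (1 - real r * cc \<gamma> r)
     + (1 - \<gamma>) * (- cc \<gamma> s * (\<Sum>j<s - n. phr \<gamma> r j) + (if s < n then 0 else phr \<gamma> r (s - n)))
     = \<gamma> * ((1 - \<gamma>) / (1 + (real s - 1) * \<gamma>)) * ((1 - \<gamma>) / (1 + (real r - 1) * \<gamma>))"
    unfolding e1 e2 S_eq by simp
  have "\<gamma> * ((1 - \<gamma>) / (1 + (real s - 1) * \<gamma>)) * ((1 - \<gamma>) / (1 + (real r - 1) * \<gamma>))
     / ((1 - \<gamma>) * (1 + real s * \<gamma>) / (1 + (real s - 1) * \<gamma>))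
     = (1 - \<gamma>) * \<gamma> / ((1 + (real r - 1) * \<gamma>) * (1 + real s * \<gamma>))"
    using dpos[of s] dpos[of r] dpos2[of s] g1 by (intro aux3) auto
  then show ?thesis unfolding mu_real unfolding Y_eq unfolding A by simp
qed

lemma case_b: assumes "n \<le> s" "s < n + r"
  shows "mu \<alpha> n r s = complex_of_real (- (real n * \<gamma>^2) / ((1 + (real r - 1) * \<gamma>) * (1 + real s * \<gamma>)))"
proof -
  have sn: "s - n \<le> r" "real (s - n) = real s - real n" using assms by auto
  have e1: "(\<Sum>j<s - n. phr \<gamma> r j) = - (real s - real n) * cc \<gamma> r" using sn by (simp add: phr_sum_lt)
  have e2: "(if s < n then 0 else phr \<gamma> r (s - n)) = - cc \<gamma> r" using assms by (simp add: phr_def)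
  have X: "\<gamma> * ((1 - \<gamma>) / (1 + (real s - 1) * \<gamma>)) * ((1 - \<gamma>) / (1 + (real r - 1) * \<gamma>))
     + (1 - \<gamma>) * ((\<gamma> / (1 + (real s - 1) * \<gamma>)) * (real s - real n) * (\<gamma> / (1 + (real r - 1) * \<gamma>))
          - \<gamma> / (1 + (real r - 1) * \<gamma>))
     = - (1 - \<gamma>) * \<gamma>^2 * real n / ((1 + (real s - 1) * \<gamma>) * (1 + (real r - 1) * \<gamma>))"
    using dpos[of s] dpos[of r] by (intro aux4) auto
  have Y: "(- (1 - \<gamma>) * \<gamma>^2 * real n / ((1 + (real s - 1) * \<gamma>) * (1 + (real r - 1) * \<gamma>)))
     / ((1 - \<gamma>) * (1 + real s * \<gamma>) / (1 + (real s - 1) * \<gamma>))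
     = - (real n * \<gamma>^2) / ((1 + (real r - 1) * \<gamma>) * (1 + real s * \<gamma>))"
    using dpos[of s] dpos[of r] dpos2[of s] g1 by (intro aux5) auto
  have A: "\<gamma> * (1 - real s * cc \<gamma> s) * (1 - real r * cc \<gamma> r)
     + (1 - \<gamma>) * (- cc \<gamma> s * (\<Sum>j<s - n. phr \<gamma> r j) + (if s < n then 0 else phr \<gamma> r (s - n)))
     = \<gamma> * ((1 - \<gamma>) / (1 + (real s - 1) * \<gamma>)) * ((1 - \<gamma>) / (1 + (real r - 1) * \<gamma>))
     + (1 - \<gamma>) * ((\<gamma> / (1 + (real s - 1) * \<gamma>)) * (real s - real n) * (\<gamma> / (1 + (real r - 1) * \<gamma>))
          - \<gamma> / (1 + (real r - 1) * \<gamma>))"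
    unfolding e1 e2 S_eq by (simp add: cc_def) (simp add: minus_divide_left algebra_simps)
  show ?thesis unfolding mu_real unfolding Y_eq unfolding A X Y ..
qed

end

theorem proposition4p6:
  fixes \<gamma> :: real and \<alpha> :: "nat \<Rightarrow> complex" and n r s :: nat
  assumes "0 < \<gamma>" and "\<gamma> < 1"
    and "\<And>k. \<alpha> k = complex_of_real (\<gamma> / (1 + real k * \<gamma>))"
    and "0 < r"
  shows "(n + r \<le> s \<longrightarrow> mu \<alpha> n r s = (if n + r = s then 1 else 0))
       \<and> (real n - 1 < real s \<and> s < n + r \<longrightarrow> mu \<alpha> n r s =
            complex_of_real (- (real n * \<gamma>^2) / ((1 + (real r - 1) * \<gamma>) * (1 + real s * \<gamma>))))
       \<and> (real s \<le> real n - 1 \<longrightarrow> mu \<alpha> n r s =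
            complex_of_real ((1 - \<gamma>) * \<gamma> / ((1 + (real r - 1) * \<gamma>) * (1 + real s * \<gamma>))))"
proof (intro conjI impI)
  assume "n + r \<le> s"
  then show "mu \<alpha> n r s = (if n + r = s then 1 else 0)" using case_a[OF assms(1-3)] by blast
next
  assume "real n - 1 < real s \<and> s < n + r"
  then have "n \<le> s" "s < n + r" by linarith+
  then show "mu \<alpha> n r s =
            complex_of_real (- (real n * \<gamma>^2) / ((1 + (real r - 1) * \<gamma>) * (1 + real s * \<gamma>)))"
    using case_b[OF assms(1-3)] by blast
next
  assume "real s \<le> real n - 1"
  then have "s < n" by linarith
  then show "mu \<alpha> n r s =
            complex_of_real ((1 - \<gamma>) * \<gamma> / ((1 + (real r - 1) * \<gamma>) * (1 + real s * \<gamma>)))"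
    using case_c[OF assms(1-3)] by blast
qed

end
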